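(* Let $p>5$ be a prime, $q=p^h$, and let $\mathcal{F}$ be the projective closure of $ax^n+by^m=1$ over $\mathbb{F}_q$, with $a,b\in\mathbb{F}_q^*$ and $m,n$ positive integers with $n\ge m>2$. If $p\mid(n-1)$ and $p\mid(m-2)$, then $\mathcal{F}$ is $\mathbb{F}_q$-Frobenius classical with respect to conics.
   Context: With $\varphi_0,\dots,\varphi_5$ the monomials of degree 2 in $x,y,1$, $\tau$ separating and $D^{(k)}_\tau$ Hasse derivatives, the $\mathbb{F}_q$-Frobenius order sequence w.r.t. conics is the lexicographically smallest $\nu_0<\dots<\nu_4$ such that the $6\times6$ determinant with first row $(\varphi_j^q)_j$ and rows $(D^{(\nu_i)}_\tau\varphi_j)_j$ is nonzero; the curve is $\mathbb{F}_q$-Frobenius classical w.r.t. conics if $\nu_i=i$ for all $i$. *)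

theory Defs
  imports "HOL-Computational_Algebra.Polynomial" "HOL-Computational_Algebra.Formal_Power_Series"
          "Jordan_Normal_Form.Determinant"
begin

text \<open>The finite field F_q is a type 'a. The function field of the curve is
  modelled inside an arbitrary field 'k containing F_q (via the embedding iota) and
  elements x, y with x transcendental over F_q and a x^n + b y^m = 1; then F_q(x,y) is the
  function field of the curve. Hasse derivatives with respect to the separating variable x
  are given by a Hasse-Schmidt derivation E : 'k -> 'k[[t]] (a ring homomorphism with
  E f = f + D1 f t + D2 f t^2 + ...), which is F_q-linear and sends x to x + t.
  On F_q(x,y) such an E is unique, so D^(k) f = fps_nth (E f) k is the Hasse derivative
  D^(k)_x f.\<close>

definition field_embedding :: "('a::field \<Rightarrow> 'k::field) \<Rightarrow> bool" where
  "field_embedding \<iota> \<longleftrightarrow> (\<forall>c d. \<iota> (c + d) = \<iota> c + \<iota> d) \<and> (\<forall>c d. \<iota> (c * d) = \<iota> c * \<iota> d) \<and> \<iota> 1 = 1"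

definition transcendental_over :: "('a::field \<Rightarrow> 'k::field) \<Rightarrow> 'k \<Rightarrow> bool" where
  "transcendental_over \<iota> x \<longleftrightarrow> (\<forall>P::'a poly. P \<noteq> 0 \<longrightarrow> poly (map_poly \<iota> P) x \<noteq> 0)"

definition hasse_wrt :: "('a::field \<Rightarrow> 'k::field) \<Rightarrow> 'k \<Rightarrow> ('k \<Rightarrow> 'k fps) \<Rightarrow> bool" where
  "hasse_wrt \<iota> x E \<longleftrightarrow>
     (\<forall>f g. E (f + g) = E f + E g) \<and> (\<forall>f g. E (f * g) = E f * E g) \<and> E 1 = 1 \<and>
     (\<forall>f. fps_nth (E f) 0 = f) \<and>
     (\<forall>c. E (\<iota> c) = fps_const (\<iota> c)) \<and>
     E x = fps_const x + fps_X"

definition hasse :: "('k \<Rightarrow> 'k fps) \<Rightarrow> nat \<Rightarrow> 'k \<Rightarrow> 'k" where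
  "hasse E k f = fps_nth (E f) k"

definition conic_monomials :: "'k::field \<Rightarrow> 'k \<Rightarrow> 'k list" where
  "conic_monomials x y = [1, x, y, x^2, x*y, y^2]"

definition frob_wronskian :: "('k::field \<Rightarrow> 'k fps) \<Rightarrow> nat \<Rightarrow> 'k list \<Rightarrow> nat list \<Rightarrow> 'k" where
  "frob_wronskian E q \<phi> \<nu> =
     det (mat 6 6 (\<lambda>(i, j). if i = 0 then (\<phi> ! j) ^ q else hasse E (\<nu> ! (i - 1)) (\<phi> ! j)))"

definition strictly_increasing5 :: "nat list \<Rightarrow> bool" where
  "strictly_increasing5 \<nu> \<longleftrightarrow> length \<nu> = 5 \<and> sorted_wrt (<) \<nu>"

definition admissible_seq :: "('k::field \<Rightarrow> 'k fps) \<Rightarrow> nat \<Rightarrow> 'k list \<Rightarrow> nat list \<Rightarrow> bool" where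
  "admissible_seq E q \<phi> \<nu> \<longleftrightarrow> strictly_increasing5 \<nu> \<and> frob_wronskian E q \<phi> \<nu> \<noteq> 0"

definition is_frob_order_seq :: "('k::field \<Rightarrow> 'k fps) \<Rightarrow> nat \<Rightarrow> 'k list \<Rightarrow> nat list \<Rightarrow> bool" where
  "is_frob_order_seq E q \<phi> \<nu> \<longleftrightarrow> admissible_seq E q \<phi> \<nu> \<and>
     (\<forall>\<nu>'. admissible_seq E q \<phi> \<nu>' \<longrightarrow> \<nu> = \<nu>' \<or> (\<nu>, \<nu>') \<in> lexord {(a, b). a < b})"

definition frobenius_classical_conics :: "('k::field \<Rightarrow> 'k fps) \<Rightarrow> nat \<Rightarrow> 'k \<Rightarrow> 'k \<Rightarrow> bool" where
  "frobenius_classical_conics E q x y \<longleftrightarrow> is_frob_order_seq E q (conic_monomials x y) [0, 1, 2, 3, 4]"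

end

theory Submission
  imports Defs "HOL-Computational_Algebra.Primes"
begin

no_notation vec_index (infixl \<open>$\<close> 100)
notation fps_nth (infixl \<open>$\<close> 75)


lemma det_expand:
  fixes f :: "nat \<times> nat \<Rightarrow> 'a::comm_ring_1"
  shows "det (mat (Suc n) (Suc n) f) =
    (\<Sum>i<Suc n. (-1)^i * f (i,0) * det (mat n n (\<lambda>(a,b). f (if a < i then a else Suc a, Suc b))))"
proof -
  have "det (mat (Suc n) (Suc n) f) = (\<Sum>i<Suc n. (mat (Suc n) (Suc n) f) $$ (i,0) * cofactor (mat (Suc n) (Suc n) f) i 0)"
    by (rule laplace_expansion_column) auto
  also have "\<dots> = (\<Sum>i<Suc n. (-1)^i * f (i,0) * det (mat n n (\<lambda>(a,b). f (if a < i then a else Suc a, Suc b))))"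
  proof (rule sum.cong[OF refl])
    fix i assume i: "i \<in> {..<Suc n}"
    have "mat_delete (mat (Suc n) (Suc n) f) i 0 = mat n n (\<lambda>(a,b). f (if a < i then a else Suc a, Suc b))"
      by (rule eq_matI) (auto simp: mat_delete_def insert_index_def)
    then show "(mat (Suc n) (Suc n) f) $$ (i,0) * cofactor (mat (Suc n) (Suc n) f) i 0 = (-1)^i * f (i,0) * det (mat n n (\<lambda>(a,b). f (if a < i then a else Suc a, Suc b)))"
      using i by (simp add: cofactor_def)
  qed
  finally show ?thesis .
qed

lemma det0: "det (mat 0 0 f) = 1"
  by (simp add: det_def)

definition ldel :: "nat \<Rightarrow> 'a list \<Rightarrow> 'a list" where
  "ldel i xs = take i xs @ drop (Suc i) xs"

function ldet :: "'a::comm_ring_1 list list \<Rightarrow> 'a" where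
  "ldet [] = 1"
| "ldet (r # rs) = (\<Sum>i<Suc (length rs). (-1)^i * hd ((r#rs)!i) * ldet (map tl (ldel i (r#rs))))"
  by pat_completeness auto
termination
  by (relation "measure length") (auto simp: ldel_def)

lemma ldel_nth: "i < length xs \<Longrightarrow> a < length xs - 1 \<Longrightarrow> ldel i xs ! a = xs ! (if a < i then a else Suc a)"
  by (auto simp: ldel_def nth_append min_def)

lemma ldet_correct:
  "length T = n \<Longrightarrow> (\<forall>r\<in>set T. length r = n) \<Longrightarrow> det (mat n n (\<lambda>(i,j). T!i!j)) = ldet T"
proof (induction n arbitrary: T)
  case 0
  then show ?case by (simp add: det0)
next
  case (Suc n)
  then obtain r rs where T: "T = r # rs" by (cases T) auto
  have "det (mat (Suc n) (Suc n) (\<lambda>(i,j). T!i!j)) =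
    (\<Sum>i<Suc n. (-1)^i * T!i!0 * det (mat n n (\<lambda>(a,b). T ! (if a < i then a else Suc a) ! Suc b)))"
    by (subst det_expand) (simp add: case_prod_beta)
  also have "\<dots> = (\<Sum>i<Suc n. (-1)^i * hd (T!i) * ldet (map tl (ldel i T)))"
  proof (rule sum.cong[OF refl])
    fix i assume i: "i \<in> {..<Suc n}"
    have len: "length (map tl (ldel i T)) = n" using Suc.prems i by (auto simp: ldel_def)
    have lr: "\<forall>r\<in>set (map tl (ldel i T)). length r = n"
      using Suc.prems i by (auto simp: ldel_def dest: in_set_takeD in_set_dropD)
    have "mat n n (\<lambda>(a,b). T ! (if a < i then a else Suc a) ! Suc b) = mat n n (\<lambda>(a,b). map tl (ldel i T) ! a ! b)"
    proof (rule eq_matI)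
      fix a b assume ab: "a < dim_row (mat n n (\<lambda>(a,b). map tl (ldel i T) ! a ! b))" "b < dim_col (mat n n (\<lambda>(a,b). map tl (ldel i T) ! a ! b))"
      then have ab': "a < n" "b < n" by auto
      have "map tl (ldel i T) ! a = tl (T ! (if a < i then a else Suc a))"
        using ab' i Suc.prems by (simp add: ldel_nth len[unfolded length_map, symmetric] del: length_map)
      moreover have "length (T ! (if a < i then a else Suc a)) = Suc n" using Suc.prems ab' i by auto
      ultimately show "mat n n (\<lambda>(a,b). T ! (if a < i then a else Suc a) ! Suc b) $$ (a,b) = mat n n (\<lambda>(a,b). map tl (ldel i T) ! a ! b) $$ (a,b)"
        using ab' by (simp add: nth_tl)
    qed auto
    moreover have "T!i!0 = hd (T!i)"
    proof -
      have "length (T!i) = Suc n" using Suc.prems i by auto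
      then show ?thesis by (cases "T!i") auto
    qed
    ultimately show "(-1)^i * T!i!0 * det (mat n n (\<lambda>(a,b). T ! (if a < i then a else Suc a) ! Suc b)) = (-1)^i * hd (T!i) * ldet (map tl (ldel i T))"
      using Suc.IH[OF len lr] by simp
  qed
  also have "\<dots> = ldet T" using Suc.prems T by simp
  finally show ?case .
qed

lemma det6:
  fixes x y xq yq y1 y2 y3 y4 w :: "'a::comm_ring_1"
  shows "ldet [[1,xq,yq,xq^2,xq*yq,yq^2],[1,x,y,x^2,x*y,y^2],[0,1,y1,2*x,x*y1+y,w],[0,0,y2,1,x*y2+y1,0],[0,0,y3,0,x*y3+y2,0],[0,0,y4,0,x*y4+y3,0]]
   = (yq^2-y^2-w*(xq-x))*(y3^2-y2*y4)"
  apply (simp add: ldel_def)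
  apply (simp add: algebra_simps power2_eq_square)
  done




definition Zp :: "nat \<Rightarrow> 'k::comm_ring_1 fps \<Rightarrow> bool" where
  "Zp p F \<longleftrightarrow> (\<forall>k. 1 \<le> k \<and> k < p \<longrightarrow> F $ k = 0)"

lemma Zp_mult:
  assumes "Zp p F" "Zp p G" shows "Zp p (F * G)"
  unfolding Zp_def
proof (intro allI impI)
  fix k assume k: "1 \<le> k \<and> k < p"
  have "(F * G) $ k = (\<Sum>i=0..k. F$i * G$(k - i))" by (rule fps_mult_nth)
  also have "\<dots> = 0"
  proof (rule sum.neutral, rule ballI)
    fix i assume i: "i \<in> {0..k}"
    show "F$i * G$(k - i) = 0"
    proof (cases "i = 0")
      case True
      then show ?thesis using assms(2) k by (simp add: Zp_def)
    next
      case False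
      then show ?thesis using assms(1) k i by (simp add: Zp_def)
    qed
  qed
  finally show "(F * G) $ k = 0" .
qed

lemma Zp_power: assumes "Zp p F" shows "Zp p (F ^ r)"
  apply (induction r)
   apply (simp add: Zp_def)
  apply (simp add: Zp_mult[OF assms])
  done

lemma Zp_mult_nth:
  assumes "Zp p F" "k < p" shows "(F * G) $ k = F $ 0 * G $ k"
proof -
  have "(F * G) $ k = (\<Sum>i=0..k. F$i * G$(k - i))" by (rule fps_mult_nth)
  also have "\<dots> = F$0 * G$(k - 0) + (\<Sum>i=Suc 0..k. F$i * G$(k - i))"
    by (rule sum.atLeast_Suc_atMost) simp
  also have "(\<Sum>i=Suc 0..k. F$i * G$(k - i)) = 0"
    using assms by (intro sum.neutral) (auto simp: Zp_def)
  finally show ?thesis by simp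
qed

lemma fps_decomp: fixes F :: "'k::comm_ring_1 fps" shows "F = fps_const (F $ 0) + fps_X * fps_shift 1 F"
proof (rule fps_ext)
  fix n show "F $ n = (fps_const (F $ 0) + fps_X * fps_shift 1 F) $ n"
    by (cases n) (simp_all add: fps_X_mult_nth)
qed

lemma Zp_frob:
  fixes F :: "'k::comm_ring_1 fps"
  assumes "prime p" "CHAR('k) = p"
  shows "Zp p (F ^ p)"
proof -
  have pc: "prime CHAR('k fps)" using assms by simp
  have "F ^ p = (fps_const (F $ 0) + fps_X * fps_shift 1 F) ^ p" by (subst fps_decomp) simp
  also have "\<dots> = fps_const (F $ 0) ^ p + (fps_X * fps_shift 1 F) ^ p"
    by (rule freshmans_dream[OF pc]) (simp add: assms)
  also have "\<dots> = fps_const ((F $ 0) ^ p) + fps_X ^ p * (fps_shift 1 F) ^ p"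
    by (simp add: power_mult_distrib)
  finally show ?thesis by (simp add: Zp_def fps_X_power_mult_nth)
qed

lemma map_poly_hom_add:
  assumes "comm_ring_hom h"
  shows "map_poly h (P + Q) = map_poly h P + map_poly h Q"
proof -
  interpret comm_ring_hom h by fact
  show ?thesis by (rule poly_eqI) (simp add: coeff_map_poly hom_add)
qed

lemma map_poly_hom_mult:
  assumes "comm_ring_hom h"
  shows "map_poly h (P * Q) = map_poly h P * map_poly h Q"
proof -
  interpret comm_ring_hom h by fact
  show ?thesis by (rule poly_eqI) (simp add: coeff_map_poly coeff_mult hom_sum hom_mult)
qed

lemma map_poly_hom_minus:
  assumes "comm_ring_hom h"
  shows "map_poly h (P - Q) = map_poly h P - map_poly h Q"
proof -
  interpret comm_ring_hom h by fact
  show ?thesis by (rule poly_eqI) (simp add: coeff_map_poly hom_minus)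
qed

lemma map_poly_hom_power:
  assumes "comm_ring_hom h"
  shows "map_poly h (P ^ r) = map_poly h P ^ r"
proof -
  interpret comm_ring_hom h by fact
  show ?thesis by (induction r) (simp_all add: map_poly_hom_mult[OF assms])
qed



lemma sq_nth:
  fixes F :: "'k::comm_ring_1 fps"
  shows "(F * F) $ 1 = 2 * F$0 * F$1"
    "(F * F) $ 2 = 2 * F$0 * F$2 + (F$1)^2"
    "(F * F) $ 3 = 2 * F$0 * F$3 + 2 * F$1 * F$2"
    "(F * F) $ 4 = 2 * F$0 * F$4 + 2 * F$1 * F$3 + (F$2)^2"
  by (simp_all add: fps_mult_nth numeral_eq_Suc atLeast0_atMost_Suc algebra_simps power2_eq_square)

lemma lin_mult_nth:
  fixes c :: "'k::comm_ring_1"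
  shows "((fps_const c + fps_X) * G) $ k = c * G $ k + (if k = 0 then 0 else G $ (k - 1))"
  by (simp add: algebra_simps)

lemma key_rel:
  fixes y y1 y2 y3 y4 :: "'k::comm_ring_1"
  assumes h2: "2*y*y2 = -(y1^2)" and h3: "2*y*y3 = -(2*y1*y2)" and h4: "2*y*y4 = -(2*y1*y3) - y2^2"
  shows "16*y^4*(y3^2-y2*y4) = -(y1^6)"
proof -
  have "16*y^4*(y3^2-y2*y4) = 4*y^2*(2*y*y3)^2 - 8*y^3*y2*(2*y*y4)" by (simp add: algebra_simps eval_nat_numeral)
  also have "\<dots> = 4*y^2*(2*y1*y2)^2 - 8*y^3*y2*(-(2*y1*y3) - y2^2)" by (simp only: h3 h4) simp
  also have "\<dots> = 16*y^2*y1^2*y2^2 + 8*y^2*y1*y2*(2*y*y3) + (2*y*y2)^3" by (simp add: algebra_simps eval_nat_numeral)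
  also have "\<dots> = 16*y^2*y1^2*y2^2 + 8*y^2*y1*y2*(-(2*y1*y2)) + (-(y1^2))^3" by (simp only: h3 h2)
  also have "\<dots> = -(y1^6)" by (simp add: algebra_simps eval_nat_numeral)
  finally show ?thesis .
qed



lemma lexmin5:
  assumes "strictly_increasing5 \<nu>"
  shows "[0,1,2,3,4] = \<nu> \<or> ([0,1,2,3,4], \<nu>) \<in> lexord {(a, b). a < (b::nat)}"
proof -
  from assms have len: "length \<nu> = 5" and sw: "sorted_wrt (<) \<nu>" by (auto simp: strictly_increasing5_def)
  from len obtain a0 a1 a2 a3 a4 where nu: "\<nu> = [a0,a1,a2,a3,a4]"
    by (auto simp: numeral_eq_Suc length_Suc_conv)
  from sw nu have "a0 < a1" "a1 < a2" "a2 < a3" "a3 < a4" by auto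
  then show ?thesis unfolding nu by auto
qed

lemma char_finite_field:
  fixes p h q :: nat
  assumes "card (UNIV :: 'a::{finite,field} set) = q" "q = p ^ h"
  shows "of_nat p = (0::'a)"
proof -
  have "(\<Sum>c\<in>(UNIV::'a set). c + 1) = (\<Sum>c\<in>UNIV. c)"
    by (rule sum.reindex_bij_witness[of _ "\<lambda>c. c - 1" "\<lambda>c. c + 1"]) auto
  then have "of_nat q = (0::'a)" using assms(1) by (simp add: sum.distrib)
  then have "(of_nat p :: 'a) ^ h = 0" using assms(2) by (simp add: of_nat_power)
  then show ?thesis by simp
qed

theorem proposition3p16:
  fixes p h q m n :: nat and a b :: "'a::{finite, field}"
    and \<iota> :: "'a \<Rightarrow> 'k::field" and x y :: 'k and E :: "'k \<Rightarrow> 'k fps"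
  assumes "prime p" and "p > 5" and "h \<ge> 1" and "q = p ^ h" and "card (UNIV :: 'a set) = q"
    and "a \<noteq> 0" and "b \<noteq> 0"
    and "m > 2" and "n \<ge> m"
    and "p dvd (n - 1)" and "p dvd (m - 2)"
    and "field_embedding \<iota>"
    and "transcendental_over \<iota> x"
    and "\<iota> a * x ^ n + \<iota> b * y ^ m = 1"
    and "hasse_wrt \<iota> x E"
  shows "frobenius_classical_conics E q x y"
proof -
  note hw = assms(15)[unfolded hasse_wrt_def]
  have Eadd: "\<And>f g. E (f + g) = E f + E g" and Emult: "\<And>f g. E (f * g) = E f * E g"
    and E1: "E 1 = 1" and E0th: "\<And>f. E f $ 0 = f" and Econst: "\<And>c. E (\<iota> c) = fps_const (\<iota> c)"
    and Ex: "E x = fps_const x + fps_X"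
    using hw by auto
  have E0: "E 0 = 0" using Eadd[of 0 0] by (metis add.right_neutral add_left_cancel)
  interpret Eh: comm_ring_hom E by unfold_locales (simp_all add: E0 E1 Eadd Emult)
  have iadd: "\<And>c d. \<iota> (c + d) = \<iota> c + \<iota> d" and imult: "\<And>c d. \<iota> (c * d) = \<iota> c * \<iota> d" and i1: "\<iota> 1 = 1"
    using assms(12) by (auto simp: field_embedding_def)
  have i0: "\<iota> 0 = 0" using iadd[of 0 0] by (metis add.right_neutral add_left_cancel)
  interpret ih: comm_ring_hom \<iota> by unfold_locales (simp_all add: i0 i1 iadd imult)
  have crh: "comm_ring_hom \<iota>" by unfold_locales
  have inz: "\<And>c. c \<noteq> 0 \<Longrightarrow> \<iota> c \<noteq> 0"
  proof
    fix c :: 'a assume "c \<noteq> 0" "\<iota> c = 0"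
    then show False using imult[of c "inverse c"] i1 by simp
  qed
  have trans: "\<And>P. P \<noteq> 0 \<Longrightarrow> poly (map_poly \<iota> P) x \<noteq> 0"
    using assms(13) by (auto simp: transcendental_over_def)

  have pa: "of_nat p = (0::'a)" by (rule char_finite_field[OF assms(5) assms(4)])
  have pk: "of_nat p = (0::'k)" using ih.hom_of_nat[of p] pa by simp
  have charp: "CHAR('k) = p"
  proof -
    have d: "CHAR('k) dvd p" using pk by (simp add: of_nat_eq_0_iff_char_dvd)
    have "CHAR('k) \<noteq> 1" using of_nat_CHAR[where ?'a='k] by auto
    then show ?thesis using d assms(1) by (auto simp: prime_nat_iff)
  qed
  have nzk: "\<And>k. 0 < k \<Longrightarrow> k < p \<Longrightarrow> of_nat k \<noteq> (0::'k)"
    using charp by (auto simp: of_nat_eq_0_iff_char_dvd dest: dvd_imp_le)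
  have two: "(2::'k) \<noteq> 0" using nzk[of 2] assms(2) by simp

  have ia: "\<iota> a \<noteq> 0" and ib: "\<iota> b \<noteq> 0" using inz assms(6,7) by auto
  have x0: "x \<noteq> 0"
  proof
    assume "x = 0"
    moreover have "poly (map_poly \<iota> [:0, 1:]) x = x" by (simp add: map_poly_pCons i0 i1)
    ultimately show False using trans[of "[:0, 1:]"] by simp
  qed
  have y0: "y \<noteq> 0"
  proof
    assume "y = 0"
    then have eq: "\<iota> a * x ^ n = 1" using assms(14) assms(8) by (simp add: power_0_left)
    have "coeff (monom a n - 1) n = a" using assms(8,9) by simp
    then have "monom a n - 1 \<noteq> 0" using assms(6) by (metis coeff_0)
    moreover have "poly (map_poly \<iota> (monom a n - 1)) x = \<iota> a * x ^ n - 1"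
      by (simp add: map_poly_hom_minus[OF crh] map_poly_monom i0 i1 poly_monom)
    ultimately show False using trans eq by auto
  qed
  obtain r where r: "n - 1 = p * r" using assms(10) by (auto simp: dvd_def)
  obtain s where s: "m - 2 = p * s" using assms(11) by (auto simp: dvd_def)
  define u where "u = x ^ (n - 1)"
  define v where "v = y ^ (m - 2)"
  have u0: "u \<noteq> 0" using x0 by (simp add: u_def)
  have v0: "v \<noteq> 0" using y0 by (simp add: v_def)
  have ZU: "Zp p (E u)"
    unfolding u_def r Eh.hom_power power_mult by (rule Zp_power, rule Zp_frob[OF assms(1) charp])
  have ZV: "Zp p (E v)"
    unfolding v_def s Eh.hom_power power_mult by (rule Zp_power, rule Zp_frob[OF assms(1) charp])
  have xn: "x ^ n = u * x"
  proof -
    have "n = (n - 1) + 1" using assms(8,9) by arith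
    then show ?thesis unfolding u_def by (metis power_add power_one_right)
  qed
  have ym: "y ^ m = v * y^2"
  proof -
    have "m = (m - 2) + 2" using assms(8) by arith
    then show ?thesis unfolding v_def by (metis power_add)
  qed
  have curve: "\<iota> a * u * x + \<iota> b * v * y^2 = 1" using assms(14) xn ym by (simp add: mult.assoc)
  have Ecurve: "fps_const (\<iota> a) * (E u * E x) + fps_const (\<iota> b) * (E v * E (y^2)) = 1"
    using arg_cong[OF curve, of E] by (simp add: Eh.hom_add Eh.hom_mult Econst mult.assoc)
  have coefk: "\<iota> a * (u * E x $ k) + \<iota> b * (v * E (y^2) $ k) = 0" if "1 \<le> k" "k \<le> 4" for k
  proof -
    have kp: "k < p" using that assms(2) by simp
    have "(fps_const (\<iota> a) * (E u * E x) + fps_const (\<iota> b) * (E v * E (y^2))) $ k = (1::'k fps) $ k"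
      using Ecurve by simp
    then show ?thesis using that Zp_mult_nth[OF ZU kp] Zp_mult_nth[OF ZV kp] E0th by simp
  qed
  define w where "w = E (y^2) $ 1"
  have Ex_nth: "E x $ k = (if k = 0 then x else if k = 1 then 1 else 0)" for k
    by (simp add: Ex)
  have rel1: "\<iota> a * u + \<iota> b * v * w = 0" using coefk[of 1] by (simp add: Ex_nth w_def mult.assoc)
  have y2z: "E (y^2) $ k = 0" if "2 \<le> k" "k \<le> 4" for k
    using coefk[of k] that ib v0 by (simp add: Ex_nth)
  have w0: "w \<noteq> 0"
  proof
    assume "w = 0" then have "\<iota> a * u = 0" using rel1 by simp
    then show False using ia u0 by simp
  qed
  define y1 where "y1 = E y $ 1"
  define y2 where "y2 = E y $ 2"
  define y3 where "y3 = E y $ 3"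
  define y4 where "y4 = E y $ 4"
  have Ey2: "E (y^2) = E y * E y" by (simp add: Emult power2_eq_square)
  have wy: "w = 2 * y * y1" unfolding w_def Ey2 sq_nth y1_def E0th ..
  have h2: "2*y*y2 = -(y1^2)" using y2z[of 2] unfolding Ey2 sq_nth y1_def y2_def E0th
    by (simp add: eq_neg_iff_add_eq_0)
  have h3: "2*y*y3 = -(2*y1*y2)" using y2z[of 3] unfolding Ey2 sq_nth y1_def y2_def y3_def E0th
    by (simp add: eq_neg_iff_add_eq_0)
  have h4: "2*y*y4 = -(2*y1*y3) - y2^2" using y2z[of 4] unfolding Ey2 sq_nth y1_def y2_def y3_def y4_def E0th
    by (simp add: algebra_simps eq_neg_iff_add_eq_0)
  have y10: "y1 \<noteq> 0" using w0 wy by auto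
  have fac2: "y3^2 - y2*y4 \<noteq> 0"
  proof
    assume "y3^2 - y2*y4 = 0"
    then have "y1^6 = 0" using key_rel[OF h2 h3 h4] by simp
    then show False using y10 by simp
  qed
  have qp: "p \<le> q" using assms(3,4) assms(2) by (simp add: self_le_power)
  have fac1: "(y^q)^2 - y^2 - w*(x^q - x) \<noteq> 0"
  proof
    assume H: "(y^q)^2 - y^2 - w*(x^q - x) = 0"
    have H': "(y^q)^2 = y^2 + w*(x^q - x)" using H by (metis diff_diff_eq eq_iff_diff_eq_0)
    have c1: "\<iota> b * v * y^2 = 1 - \<iota> a * u * x" using curve by (metis add_diff_cancel_left')
    have c2: "\<iota> b * v * w = -(\<iota> a * u)" using rel1 by (metis add.commute eq_neg_iff_add_eq_0)
    define N where "N = m - 2 + 2 * q"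
    have "\<iota> b * v * (y^q)^2 = \<iota> b * v * y^2 + (\<iota> b * v * w) * (x^q - x)"
      by (simp add: H' algebra_simps)
    also have "\<dots> = 1 - \<iota> a * (u * x^q)" unfolding c1 c2 by (simp add: algebra_simps)
    finally have B0: "\<iota> b * v * (y^q)^2 = 1 - \<iota> a * (u * x^q)" .
    have yN: "v * (y^q)^2 = y^N" unfolding v_def N_def by (simp add: power_add power_mult[symmetric] ac_simps)
    have ux: "u * x^q = x^(n - 1 + q)" unfolding u_def by (simp add: power_add)
    have B: "\<iota> b * y^N = 1 - \<iota> a * x^(n - 1 + q)" using B0 yN ux by (simp add: mult.assoc)
    have A: "\<iota> b * y^m = 1 - \<iota> a * x^n" using assms(14) by (metis add_diff_cancel_left')
    have "\<iota> b ^ m * (1 - \<iota> a * x^n) ^ N = \<iota> b ^ m * (\<iota> b * y^m) ^ N" by (simp add: A)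
    also have "\<dots> = \<iota> b ^ N * (\<iota> b * y^N) ^ m"
      by (simp add: power_mult_distrib power_mult[symmetric] ac_simps)
    also have "\<dots> = \<iota> b ^ N * (1 - \<iota> a * x^(n - 1 + q)) ^ m" by (simp add: B)
    finally have AB: "\<iota> b ^ m * (1 - \<iota> a * x^n) ^ N - \<iota> b ^ N * (1 - \<iota> a * x^(n - 1 + q)) ^ m = 0" by simp
    define Q1 where "Q1 = 1 - monom a n"
    define Q2 where "Q2 = 1 - monom a (n - 1 + q)"
    define P where "P = smult (b ^ m) (Q1 ^ N) - smult (b ^ N) (Q2 ^ m)"
    have "poly (map_poly \<iota> P) x = \<iota> b ^ m * (1 - \<iota> a * x^n) ^ N - \<iota> b ^ N * (1 - \<iota> a * x^(n - 1 + q)) ^ m"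
      unfolding P_def Q1_def Q2_def
      by (simp add: map_poly_hom_minus[OF crh] map_poly_hom_power[OF crh] map_poly_smult i0 imult
            map_poly_monom poly_monom ih.hom_power)
    then have P0: "poly (map_poly \<iota> P) x = 0" using AB by simp
    have nN: "n > 0" using assms(8,9) by simp
    have cQ1: "coeff Q1 i = (if i = 0 then 1 else 0) - (if n = i then a else 0)" for i
      by (simp add: Q1_def coeff_monom)
    have dQ1: "degree Q1 = n"
    proof (rule antisym)
      show "degree Q1 \<le> n" by (rule degree_le) (auto simp: cQ1)
      show "n \<le> degree Q1" by (rule le_degree) (use nN assms(6) in \<open>simp add: cQ1\<close>)
    qed
    have lQ1: "lead_coeff Q1 = - a" using nN by (simp add: dQ1 cQ1)
    have Q10: "Q1 \<noteq> 0" using lQ1 assms(6) by auto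
    have c1N: "coeff (Q1 ^ N) (n * N) = (- a) ^ N"
      using degree_power_eq[OF Q10, of N] lead_coeff_power[of Q1 N] lQ1 dQ1 by (simp add: mult.commute)
    have dQ2: "degree Q2 \<le> n - 1 + q" by (rule degree_le) (auto simp: Q2_def coeff_monom)
    have arx: "(n - 1 + q) * m < n * N"
    proof -
      define n' where "n' = n - 1"
      define m' where "m' = m - 2"
      define q' where "q' = q - 1"
      have n': "n = Suc n'" using nN unfolding n'_def by arith
      have m': "m = Suc (Suc m')" using assms(8) unfolding m'_def by arith
      have q': "q = Suc q'" using qp assms(2) unfolding q'_def by arith
      have q'1: "q' \<ge> 1" using qp assms(2) unfolding q'_def by arith
      have nm: "n' \<ge> m' + 1" using assms(9) n' m' by simp
      have "q' * m' < q' * (2 * n')" using q'1 nm by (intro mult_strict_left_mono) auto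
      then show ?thesis unfolding N_def n' m' q' by (simp add: algebra_simps)
    qed
    have c2N: "coeff (Q2 ^ m) (n * N) = 0"
    proof (rule coeff_eq_0)
      have "degree (Q2 ^ m) \<le> degree Q2 * m" by (rule degree_power_le)
      also have "\<dots> \<le> (n - 1 + q) * m" using dQ2 by simp
      finally show "degree (Q2 ^ m) < n * N" using arx by linarith
    qed
    have "coeff P (n * N) = b ^ m * (- a) ^ N" by (simp add: P_def c1N c2N)
    then have "P \<noteq> 0" using assms(6,7) by auto
    then show False using trans P0 by blast
  qed
  have y1': "E y $ Suc 0 = y1" and w': "E (y^2) $ Suc 0 = w" by (simp_all add: y1_def w_def)
  have hx: "E (x*x) $ Suc 0 = 2*x" "E (x*x) $ 2 = 1" "E (x*x) $ 3 = 0" "E (x*x) $ 4 = 0"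
    using sq_nth[of "E x"] by (simp_all add: Emult Ex_nth E0th)
  have hy: "E (y*y) $ Suc 0 = w" "E (y*y) $ 2 = 0" "E (y*y) $ 3 = 0" "E (y*y) $ 4 = 0"
    using y2z[of 2] y2z[of 3] y2z[of 4] by (simp_all add: w_def power2_eq_square)
  have cases6: "\<And>i::nat. i < 6 \<Longrightarrow> i = 0 \<or> i = 1 \<or> i = 2 \<or> i = 3 \<or> i = 4 \<or> i = 5" by auto
  have Ex2: "E (x^2) = E x * E x" by (simp add: Emult power2_eq_square)
  have Exy: "E (x*y) = (fps_const x + fps_X) * E y" by (simp add: Emult Ex)
  have pw1: "(x^2)^q = (x^q)^2" by (metis power_mult mult.commute)
  have pw2: "(y^2)^q = (y^q)^2" by (metis power_mult mult.commute)
  define T where "T = [[1, x^q, y^q, (x^q)^2, x^q*y^q, (y^q)^2],[1,x,y,x^2,x*y,y^2],[0,1,y1,2*x,x*y1+y,w],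
     [0,0,y2,1,x*y2+y1,0],[0,0,y3,0,x*y3+y2,0],[0,0,y4,0,x*y4+y3,0]]"
  have W: "frob_wronskian E q (conic_monomials x y) [0,1,2,3,4] = det (mat 6 6 (\<lambda>(i,j). T!i!j))"
    unfolding frob_wronskian_def
    apply (rule arg_cong[where f = det])
    apply (rule eq_matI)
    subgoal for i j
      using cases6[of i] cases6[of j]
      by (auto simp: T_def hasse_def conic_monomials_def Ex2 Exy sq_nth lin_mult_nth Ex_nth E0th E1
          y1_def[symmetric] y2_def[symmetric] y3_def[symmetric] y4_def[symmetric] w_def[symmetric] y2z
          pw1 pw2 power_mult_distrib y1' w' power2_eq_square hx hy)
    by auto
  also have "\<dots> = ldet T" by (rule ldet_correct) (auto simp: T_def)
  also have "\<dots> = ((y^q)^2 - y^2 - w*(x^q - x)) * (y3^2 - y2*y4)" unfolding T_def by (rule det6)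
  finally have Wnz: "frob_wronskian E q (conic_monomials x y) [0,1,2,3,4] \<noteq> 0"
    using fac1 fac2 by simp
  have adm: "admissible_seq E q (conic_monomials x y) [0,1,2,3,4]"
    using Wnz by (simp add: admissible_seq_def strictly_increasing5_def)
  show ?thesis
    unfolding frobenius_classical_conics_def is_frob_order_seq_def
    using adm lexmin5 by (auto simp: admissible_seq_def)
qed

end
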